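(* Let $T$ be a tree on $n\ge 3$ vertices and let $\mathcal{P}$ be a separating path system of $T$. Then: (i) with the exception of at most one leaf, every leaf of $T$ is an endpoint of a path in $\mathcal{P}$; (ii) if a path in $\mathcal{P}$ has two leaves $u,v$ of $T$ as its endpoints, then there is at least one path in $\mathcal{P}$ which has exactly one of $u,v$ as an endpoint; (iii) every vertex of degree two in $T$ is an endpoint of a path in $\mathcal{P}$.
   Context: For a graph $G$, a family $\mathcal{P}$ of subsets of $E(G)$ is a separating path system of $G$ if every member of $\mathcal{P}$ is (the edge set of) a path in $G$, and for every pair of distinct edges $e,e'\in E(G)$ there is some $P\in\mathcal{P}$ containing exactly one of $e,e'$. *)

theory Defs
  imports Main
begin

definition graph :: "'a set \<Rightarrow> 'a set set \<Rightarrow> bool" where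
  "graph V E \<longleftrightarrow> finite V \<and> (\<forall>e\<in>E. \<exists>u v. u \<in> V \<and> v \<in> V \<and> u \<noteq> v \<and> e = {u, v})"

definition walk_edges :: "'a list \<Rightarrow> 'a set set" where
  "walk_edges xs = set (map (\<lambda>(x, y). {x, y}) (zip xs (tl xs)))"

definition is_vpath :: "'a set \<Rightarrow> 'a set set \<Rightarrow> 'a list \<Rightarrow> bool" where
  "is_vpath V E xs \<longleftrightarrow> xs \<noteq> [] \<and> distinct xs \<and> set xs \<subseteq> V \<and> walk_edges xs \<subseteq> E"

definition connected_graph :: "'a set \<Rightarrow> 'a set set \<Rightarrow> bool" where
  "connected_graph V E \<longleftrightarrow>
     (\<forall>u\<in>V. \<forall>v\<in>V. \<exists>xs. is_vpath V E xs \<and> hd xs = u \<and> last xs = v)"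

definition has_cycle :: "'a set \<Rightarrow> 'a set set \<Rightarrow> bool" where
  "has_cycle V E \<longleftrightarrow> (\<exists>xs. length xs \<ge> 3 \<and> is_vpath V E xs \<and> {last xs, hd xs} \<in> E)"

definition tree :: "'a set \<Rightarrow> 'a set set \<Rightarrow> bool" where
  "tree V E \<longleftrightarrow> graph V E \<and> V \<noteq> {} \<and> connected_graph V E \<and> \<not> has_cycle V E"

definition degree :: "'a set set \<Rightarrow> 'a \<Rightarrow> nat" where
  "degree E v = card {e \<in> E. v \<in> e}"

definition leaf :: "'a set set \<Rightarrow> 'a \<Rightarrow> bool" where
  "leaf E v \<longleftrightarrow> degree E v = 1"

definition is_path_edges :: "'a set \<Rightarrow> 'a set set \<Rightarrow> 'a set set \<Rightarrow> bool" where
  "is_path_edges V E P \<longleftrightarrow> (\<exists>xs. is_vpath V E xs \<and> P = walk_edges xs)"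

definition path_endpoint :: "'a set set \<Rightarrow> 'a \<Rightarrow> bool" where
  "path_endpoint P v \<longleftrightarrow> degree P v = 1"

definition separating_path_system :: "'a set \<Rightarrow> 'a set set \<Rightarrow> 'a set set set \<Rightarrow> bool" where
  "separating_path_system V E \<P> \<longleftrightarrow>
     (\<forall>P\<in>\<P>. is_path_edges V E P) \<and>
     (\<forall>e\<in>E. \<forall>e'\<in>E. e \<noteq> e' \<longrightarrow> (\<exists>P\<in>\<P>. (e \<in> P) \<noteq> (e' \<in> P)))"

end

theory Submission
  imports Defs
begin

lemma deg1_iff: "degree E v = 1 \<longleftrightarrow> (\<exists>e. {e\<in>E. v\<in>e} = {e})"
  unfolding degree_def using card_1_singleton_iff by auto

lemma leaf_edge:
  assumes "leaf E u" obtains e where "{x\<in>E. u\<in>x} = {e}"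
  using assms unfolding leaf_def deg1_iff by blast

lemma endpoint_sub:
  assumes "{x\<in>E. u\<in>x} = {e}" "Q \<subseteq> E"
  shows "path_endpoint Q u \<longleftrightarrow> e \<in> Q"
proof -
  have "{x\<in>Q. u\<in>x} = (if e \<in> Q then {e} else {})" using assms by auto
  thus ?thesis unfolding path_endpoint_def degree_def by auto
qed

lemma path_sub: "is_path_edges V E P \<Longrightarrow> P \<subseteq> E"
  unfolding is_path_edges_def is_vpath_def by auto

lemma leaves_distinct_edges:
  assumes T: "tree V E" and c: "card V \<ge> 3" and u: "u \<in> V" and v: "v \<in> V" and uv: "u \<noteq> v"
    and eu: "{x\<in>E. u\<in>x} = {e}" and ev: "{x\<in>E. v\<in>x} = {e}"
  shows False
proof -
  have g: "graph V E" and con: "connected_graph V E" using T unfolding tree_def by auto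
  have eE: "e \<in> E" "u \<in> e" "v \<in> e" using eu ev by auto
  then obtain a b where ab: "e = {a,b}" "a \<noteq> b" using g unfolding graph_def by blast
  hence e: "e = {u,v}" using eE uv by auto
  have fin: "finite V" using g unfolding graph_def by auto
  have "\<not> V \<subseteq> {u,v}"
  proof
    assume "V \<subseteq> {u,v}"
    hence "card V \<le> card {u,v}" by (simp add: card_mono)
    also have "\<dots> \<le> 2" by (simp add: card_insert_if)
    finally show False using c by simp
  qed
  then obtain w where w: "w \<in> V" "w \<noteq> u" "w \<noteq> v" by auto
  obtain xs where xs: "is_vpath V E xs" "hd xs = u" "last xs = w"
    using con u w unfolding connected_graph_def by blast
  have d: "distinct xs" and we: "walk_edges xs \<subseteq> E" and ne: "xs \<noteq> []"
    using xs(1) unfolding is_vpath_def by auto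
  obtain rest where r: "xs = u # rest" using ne xs(2) by (cases xs) auto
  have "rest \<noteq> []" using r xs(3) w by auto
  then obtain b rest2 where r2: "rest = b # rest2" by (cases rest) auto
  have "{u,b} \<in> E" using we r r2 unfolding walk_edges_def by auto
  hence "{u,b} \<in> {x\<in>E. u\<in>x}" by simp
  hence "{u,b} = e" unfolding eu by simp
  hence bv: "b = v" using e uv by (auto simp: doubleton_eq_iff)
  have "rest2 \<noteq> []" using r r2 bv xs(3) w by auto
  then obtain c rest3 where r3: "rest2 = c # rest3" by (cases rest2) auto
  have "{b,c} \<in> E" using we r r2 r3 unfolding walk_edges_def by auto
  hence "{b,c} \<in> {x\<in>E. v\<in>x}" using bv by simp
  hence "{v,c} = e" unfolding ev using bv by simp
  hence vc: "{v,c} = {u,v}" using e by simp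
  have dd: "distinct (u # v # c # rest3)" using d r r2 r3 bv by simp
  hence "c \<noteq> v" "c \<noteq> u" by auto
  thus False using vc by (metis insertI1 insert_commute insert_iff singletonD)
qed

theorem lemma6p1:
  fixes V :: "'a set" and E :: "'a set set" and \<P> :: "'a set set set"
  assumes "tree V E" and "card V \<ge> 3" and "separating_path_system V E \<P>"
  shows "(card {v \<in> V. leaf E v \<and> \<not> (\<exists>P\<in>\<P>. path_endpoint P v)} \<le> 1) \<and>
    (\<forall>P\<in>\<P>. \<forall>u\<in>V. \<forall>v\<in>V. u \<noteq> v \<and> leaf E u \<and> leaf E v \<and>
            path_endpoint P u \<and> path_endpoint P v \<longrightarrow>
            (\<exists>Q\<in>\<P>. path_endpoint Q u \<noteq> path_endpoint Q v)) \<and>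
    (\<forall>v\<in>V. degree E v = 2 \<longrightarrow> (\<exists>P\<in>\<P>. path_endpoint P v))"
proof -
  have sub: "Q \<subseteq> E" if "Q \<in> \<P>" for Q
  proof -
    have "is_path_edges V E Q" using assms(3) that unfolding separating_path_system_def by blast
    thus ?thesis by (rule path_sub)
  qed
  have sep: "\<exists>P\<in>\<P>. (e \<in> P) \<noteq> (e' \<in> P)" if "e \<in> E" "e' \<in> E" "e \<noteq> e'" for e e'
    using assms(3) that unfolding separating_path_system_def by blast
  have fin: "finite V" using assms(1) unfolding tree_def graph_def by (elim conjE)
  have key: "\<exists>Q\<in>\<P>. path_endpoint Q u \<noteq> path_endpoint Q v"
    if pr: "u \<in> V" "v \<in> V" "u \<noteq> v" "leaf E u" "leaf E v" for u v
  proof -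
    obtain eu where eu: "{x\<in>E. u\<in>x} = {eu}" by (rule leaf_edge[OF pr(4)])
    obtain ev where ev: "{x\<in>E. v\<in>x} = {ev}" by (rule leaf_edge[OF pr(5)])
    have ne: "eu \<noteq> ev"
    proof
      assume h: "eu = ev"
      have ev': "{x\<in>E. v\<in>x} = {eu}" unfolding h by (rule ev)
      show False by (rule leaves_distinct_edges[OF assms(1,2) pr(1-3) eu ev'])
    qed
    have m1: "eu \<in> {x\<in>E. u\<in>x}" unfolding eu by simp
    have m2: "ev \<in> {x\<in>E. v\<in>x}" unfolding ev by simp
    have "\<exists>P\<in>\<P>. (eu \<in> P) \<noteq> (ev \<in> P)"
    proof (rule sep)
      show "eu \<in> E" using m1 by simp
      show "ev \<in> E" using m2 by simp
      show "eu \<noteq> ev" by (rule ne)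
    qed
    then obtain Q where Q: "Q \<in> \<P>" "(eu \<in> Q) \<noteq> (ev \<in> Q)" by blast
    have QE: "Q \<subseteq> E" by (rule sub[OF Q(1)])
    have "path_endpoint Q u \<noteq> path_endpoint Q v"
      unfolding endpoint_sub[OF eu QE] endpoint_sub[OF ev QE] by (rule Q(2))
    thus ?thesis using Q(1) by blast
  qed
  have p1: "card {v \<in> V. leaf E v \<and> \<not> (\<exists>P\<in>\<P>. path_endpoint P v)} \<le> 1"
  proof -
    let ?S = "{v \<in> V. leaf E v \<and> \<not> (\<exists>P\<in>\<P>. path_endpoint P v)}"
    have "finite ?S" using fin by simp
    moreover have "\<forall>a\<in>?S. \<forall>b\<in>?S. a = b"
    proof (intro ballI)
      fix a b assume a: "a \<in> ?S" and b: "b \<in> ?S"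
      have a1: "a \<in> V" "leaf E a" "\<And>P. P \<in> \<P> \<Longrightarrow> \<not> path_endpoint P a" using a by simp_all
      have b1: "b \<in> V" "leaf E b" "\<And>P. P \<in> \<P> \<Longrightarrow> \<not> path_endpoint P b" using b by simp_all
      show "a = b"
      proof (rule ccontr)
        assume "a \<noteq> b"
        then obtain Q where Q: "Q \<in> \<P>" "path_endpoint Q a \<noteq> path_endpoint Q b"
          using key[OF a1(1) b1(1) _ a1(2) b1(2)] by blast
        thus False using a1(3)[OF Q(1)] b1(3)[OF Q(1)] by simp
      qed
    qed
    ultimately have "card ?S \<le> Suc 0" by (simp only: card_le_Suc0_iff_eq)
    thus ?thesis by simp
  qed
  have p3: "\<exists>P\<in>\<P>. path_endpoint P v" if "degree E v = 2" for v
  proof -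
    have "card {e\<in>E. v\<in>e} = 2" using that unfolding degree_def .
    then obtain x y where xy: "{e\<in>E. v\<in>e} = {x,y}" "x \<noteq> y"
      unfolding card_2_iff by blast
    have xE: "x \<in> {e\<in>E. v\<in>e}" "y \<in> {e\<in>E. v\<in>e}" unfolding xy(1) by simp_all
    then obtain Q where Q: "Q \<in> \<P>" "(x \<in> Q) \<noteq> (y \<in> Q)" using sep[of x y] xy(2) by blast
    have QE: "Q \<subseteq> E" by (rule sub[OF Q(1)])
    have eq: "{e\<in>Q. v\<in>e} = {x,y} \<inter> Q"
    proof -
      have "{e\<in>Q. v\<in>e} = {e\<in>E. v\<in>e} \<inter> Q" using QE by blast
      thus ?thesis unfolding xy(1) .
    qed
    have "{x,y} \<inter> Q = {x} \<or> {x,y} \<inter> Q = {y}" using Q(2) by auto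
    hence "card {e\<in>Q. v\<in>e} = 1" unfolding eq by auto
    thus ?thesis using Q(1) unfolding path_endpoint_def degree_def by blast
  qed
  show ?thesis
  proof (intro conjI ballI impI)
    show "card {v \<in> V. leaf E v \<and> \<not> (\<exists>P\<in>\<P>. path_endpoint P v)} \<le> 1" by (rule p1)
  next
    fix P u v assume "P \<in> \<P>" "u \<in> V" "v \<in> V" and h: "u \<noteq> v \<and> leaf E u \<and> leaf E v \<and>
            path_endpoint P u \<and> path_endpoint P v"
    show "\<exists>Q\<in>\<P>. path_endpoint Q u \<noteq> path_endpoint Q v"
      using key[of u v] \<open>u \<in> V\<close> \<open>v \<in> V\<close> h by blast
  next
    fix v assume "v \<in> V" "degree E v = 2"
    thus "\<exists>P\<in>\<P>. path_endpoint P v" using p3 by blast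
  qed
qed

end
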